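(* Let $\mathfrak g=\mathfrak{sl}_2$ with simple root $\alpha_1$ normalized by $(\alpha_1,\alpha_1)=2$, let $k\ge0$ be an integer and $V=V_\Lambda$ the irreducible $(2k+1)$-dimensional module of highest weight $\Lambda=k\alpha_1$ with highest weight vector $v_\Lambda$ ($n=1$, $z_1=0$, so $Z_1=1$). Let $\xi\in\mathfrak h^*$ with $\xi_1:=(\xi,\alpha_1)\notin\{1,\dots,k\}$, and let $t_{cr}=(t_1,\dots,t_k)$ be an isolated critical point of $$\Phi_H(t)=\sum_{1\le j<j'\le k}2\log(t_j-t_{j'})-2k\sum_{j=1}^k\log(t_j-1)-(\xi_1-1)\sum_{j=1}^k\log t_j.$$ Let $u=\Big(\prod_{j=1}^k\frac{1}{t_j-1}\Big)\Big|_{t=t_{cr}}\,f^kv_\Lambda\in V[0]$ (the Bethe vector $u(t_{cr},1)$). Then $$\langle\psi^\xi_u,\psi^\xi_u\rangle=\frac{\big[(\xi_1+1)(\xi_1+2)\cdots(\xi_1+k)\big]^3\,k!}{(\xi_1-1)(\xi_1-2)\cdots(\xi_1-k)\,(k+1)(k+2)\cdots(2k)}.$$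
   Context: Notation for $\mathfrak g=\mathfrak{sl}_2$: Cartan subalgebra $\mathfrak h$, simple root $\alpha_1$, $\rho=\frac12\alpha_1$, invariant form $(\cdot,\cdot)$ with $(\alpha_1,\alpha_1)=2$; Chevalley generators $e,f,h$; $\omega$ the automorphism of $U(\mathfrak g)$ with $\omega(e)=-f,\omega(f)=-e,\omega(h)=-h$; $a$ the anti-automorphism with $a(x)=-x$ for $x\in\mathfrak g$. $\gamma:U(\mathfrak g)\to\mathbb C[\mathfrak h^*]$ projection along $fU(\mathfrak g)+U(\mathfrak g)e$; $S_\mu(g_1,g_2)=\gamma(a\omega(g_1)g_2)(\mu)$. The Shapovalov form $S$ on $V$ is the symmetric bilinear form with $S(v_\Lambda,v_\Lambda)=1$ and $S(gx,y)=S(x,a\omega(g)y)$. Basis $\{F_j\}_{j\ge0}=\{f^j\}$ of $U(\mathfrak n_-)$; $(S^{-1}_\lambda)_{jk}$: entries of the inverse of $(S_\lambda(F_j,F_k))$. $X=e^{-2\pi i\alpha_1(\lambda)}$ for $\lambda\in\mathfrak h$. $A_X$ is the linear map on $U(\mathfrak n_-)$ given on $f^m$ by $A_X(f^m)=\sum_{\sigma\in S_m}\prod_{k=1}^m\frac{X^{a^\sigma_k+1}}{1-X^k}f^m$, $a_k^\sigma=\#\{j:k\le j\le m-1,\sigma(j)>\sigma(j+1)\}$, $A_X(1)=1$. For $u\in V[0]$ (under the hypothesis on $\xi_1$ the needed inverse entries are regular at $\xi-\rho$), $\psi^\xi_u(\lambda)=e^{2\pi i\xi(\lambda)}\sum_{j,k\ge0}(S^{-1}_{\xi-\rho})_{jk}A_X(F_j)\omega(F_k)u$,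 a $V[0]$-valued function of $\lambda\in\mathfrak h$. The pairing is $\langle\psi_1,\psi_2\rangle=\int_{-i\delta}^{1-i\delta}S(\psi_1(\lambda),\psi_2(-\lambda))\,dy$, with coordinate $y=\alpha_1(\lambda)$ on $\mathfrak h$ and any $\delta>0$. A critical point of $\Phi_H$ is a point with $t_j\ne t_{j'}$ ($j\neq j'$), $t_j\ne0,1$, where all $\partial\Phi_H/\partial t_j$ vanish; isolated means isolated in the critical set. *)

theory Defs
  imports "HOL-Analysis.Analysis" "HOL-Combinatorics.Permutations"
begin

text \<open>A vector of V is represented by its coordinates w.r.t. the basis
  f^i v_Lambda, i = 0..2k (coordinates with i > 2k are ignored).
  Since (Lambda, alpha1) = 2k, h v = 2k v, and e f^i v = i (2k - i + 1) f^(i-1) v.\<close>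

type_synonym vec = "nat \<Rightarrow> complex"

definition f_act :: "nat \<Rightarrow> vec \<Rightarrow> vec" where
  "f_act k x = (\<lambda>i. if i = 0 \<or> i > 2*k then 0 else x (i - 1))"

definition e_act :: "nat \<Rightarrow> vec \<Rightarrow> vec" where
  "e_act k x = (\<lambda>i. if i < 2*k then of_nat (i+1) * (of_nat (2*k) - of_nat i) * x (i+1) else 0)"

definition h_act :: "nat \<Rightarrow> vec \<Rightarrow> vec" where
  "h_act k x = (\<lambda>i. if i \<le> 2*k then (of_nat (2*k) - 2 * of_nat i) * x i else 0)"

definition bil :: "nat \<Rightarrow> (nat \<Rightarrow> nat \<Rightarrow> complex) \<Rightarrow> vec \<Rightarrow> vec \<Rightarrow> complex" where
  "bil k G x y = (\<Sum>i\<le>2*k. \<Sum>j\<le>2*k. x i * y j * G i j)"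

text \<open>Shapovalov form: symmetric bilinear, S(v,v) = 1, S(g x, y) = S(x, a omega(g) y),
  where a omega(e) = f, a omega(f) = e, a omega(h) = h.\<close>
definition is_shap_gram :: "nat \<Rightarrow> (nat \<Rightarrow> nat \<Rightarrow> complex) \<Rightarrow> bool" where
  "is_shap_gram k G \<longleftrightarrow>
     (\<forall>i j. (2*k < i \<or> 2*k < j) \<longrightarrow> G i j = 0) \<and>
     (\<forall>i j. G i j = G j i) \<and>
     G 0 0 = 1 \<and>
     (\<forall>x y. bil k G (e_act k x) y = bil k G x (f_act k y)) \<and>
     (\<forall>x y. bil k G (f_act k x) y = bil k G x (e_act k y)) \<and>
     (\<forall>x y. bil k G (h_act k x) y = bil k G x (h_act k y))"

definition shap :: "nat \<Rightarrow> vec \<Rightarrow> vec \<Rightarrow> complex" where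
  "shap k x y = bil k (THE G. is_shap_gram k G) x y"

text \<open>Verma module M_mu, in coordinates w.r.t. the basis f^i v_mu, with muh = (mu, alpha1):
  e f^(i+1) v_mu = (i+1)(muh - i) f^i v_mu.  For g in U(g), gamma(g)(mu) is the coefficient of
  v_mu in g v_mu whenever g has weight 0; S_mu(f^j, f^m) = gamma(e^j f^m)(mu)
  (which is 0 for j \<noteq> m, by weight).\<close>

definition verma_e :: "complex \<Rightarrow> vec \<Rightarrow> vec" where
  "verma_e muh x = (\<lambda>i. of_nat (i+1) * (muh - of_nat i) * x (i+1))"

definition verma_f :: "vec \<Rightarrow> vec" where
  "verma_f x = (\<lambda>i. if i = 0 then 0 else x (i - 1))"

definition shapU :: "complex \<Rightarrow> nat \<Rightarrow> nat \<Rightarrow> complex" where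
  "shapU muh j m = ((verma_e muh ^^ j) ((verma_f ^^ m) (\<lambda>i. if i = 0 then 1 else 0))) 0"

text \<open>Inverse of the Shapovalov matrix (S_mu(F_j,F_m)): the matrix is block diagonal by
  weight with 1x1 blocks (F_j = f^j has weight -j alpha1), so the inverse is computed blockwise.\<close>
definition shapU_inv :: "complex \<Rightarrow> nat \<Rightarrow> nat \<Rightarrow> complex" where
  "shapU_inv muh j m = (if j = m then inverse (shapU muh j j) else 0)"

section \<open>The map A_X on U(n_-): A_X(f^m) = AX_coeff X m * f^m\<close>

definition desc_count :: "(nat \<Rightarrow> nat) \<Rightarrow> nat \<Rightarrow> nat \<Rightarrow> nat" where
  "desc_count \<sigma> m k = card {j. k \<le> j \<and> j \<le> m - 1 \<and> \<sigma> j > \<sigma> (j+1)}"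

definition AX_coeff :: "complex \<Rightarrow> nat \<Rightarrow> complex" where
  "AX_coeff X m = (\<Sum>\<sigma>\<in>{\<sigma>. \<sigma> permutes {1..m}}.
      \<Prod>k=1..m. X ^ (desc_count \<sigma> m k + 1) / (1 - X ^ k))"

text \<open>lambda in h is given by the coordinate y = alpha1(lambda); since (alpha1,alpha1) = 2,
  xi(lambda) = xi1 * y / 2 where xi1 = (xi, alpha1); X = exp(-2 pi i y);
  (xi - rho, alpha1) = xi1 - 1; omega(f^m) = (-e)^m.  For m > 2k, e^m = 0 on V, hence all
  nonzero terms of the double sum have j, m \<le> 2k.\<close>

definition psi :: "nat \<Rightarrow> complex \<Rightarrow> vec \<Rightarrow> complex \<Rightarrow> vec" where
  "psi k xi1 u y =
     (let X = exp (- 2 * pi * \<i> * y) in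
      (\<lambda>i. exp (2 * pi * \<i> * (xi1 * y / 2)) *
         (\<Sum>j\<le>2*k. \<Sum>m\<le>2*k. shapU_inv (xi1 - 1) j m * AX_coeff X j *
             ((f_act k ^^ j) (((\<lambda>x. - e_act k x) ^^ m) u)) i)))"

definition pairing :: "nat \<Rightarrow> (complex \<Rightarrow> vec) \<Rightarrow> (complex \<Rightarrow> vec) \<Rightarrow> real \<Rightarrow> complex" where
  "pairing k p1 p2 \<delta> =
     integral {0..1::real} (\<lambda>x. shap k (p1 (of_real x - \<i> * of_real \<delta>))
                                        (p2 (- (of_real x - \<i> * of_real \<delta>))))"

text \<open>Phi_H(t) = sum_{j<j'} 2 log(t_j - t_j') - 2k sum_j log(t_j - 1) - (xi1 - 1) sum_j log t_j
  (multivalued); its partial derivatives are single valued:\<close>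
definition dPhi_H :: "nat \<Rightarrow> complex \<Rightarrow> (nat \<Rightarrow> complex) \<Rightarrow> nat \<Rightarrow> complex" where
  "dPhi_H k xi1 t j =
     (\<Sum>j'\<in>{1..k} - {j}. 2 / (t j - t j')) - 2 * of_nat k / (t j - 1) - (xi1 - 1) / t j"

definition is_crit :: "nat \<Rightarrow> complex \<Rightarrow> (nat \<Rightarrow> complex) \<Rightarrow> bool" where
  "is_crit k xi1 t \<longleftrightarrow>
     (\<forall>j\<in>{1..k}. \<forall>j'\<in>{1..k}. j \<noteq> j' \<longrightarrow> t j \<noteq> t j') \<and>
     (\<forall>j\<in>{1..k}. t j \<noteq> 0 \<and> t j \<noteq> 1) \<and>
     (\<forall>j\<in>{1..k}. dPhi_H k xi1 t j = 0)"

definition is_isolated_crit :: "nat \<Rightarrow> complex \<Rightarrow> (nat \<Rightarrow> complex) \<Rightarrow> bool" where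
  "is_isolated_crit k xi1 t \<longleftrightarrow> is_crit k xi1 t \<and>
     (\<exists>\<epsilon>>0. \<forall>s. is_crit k xi1 s \<and> (\<forall>j\<in>{1..k}. cmod (s j - t j) < \<epsilon>)
                \<longrightarrow> (\<forall>j\<in>{1..k}. s j = t j))"

definition bethe_vec :: "nat \<Rightarrow> (nat \<Rightarrow> complex) \<Rightarrow> vec" where
  "bethe_vec k t = (\<lambda>i. if i = k then (\<Prod>j=1..k. 1 / (t j - 1)) else 0)"

end

theory Submission
  imports Defs "HOL-Computational_Algebra.Polynomial" "HOL-Computational_Algebra.Formal_Power_Series" "HOL-Combinatorics.Multiset_Permutations"
begin

definition gk :: "nat \<Rightarrow> nat \<Rightarrow> complex" where
  "gk k i = (\<Prod>r<i. of_nat (r+1) * (of_nat (2*k) - of_nat r))"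

definition G0 :: "nat \<Rightarrow> nat \<Rightarrow> nat \<Rightarrow> complex" where
  "G0 k i j = (if i = j \<and> i \<le> 2*k then gk k i else 0)"

definition dl :: "nat \<Rightarrow> complex \<Rightarrow> vec" where
  "dl n a = (\<lambda>l. if l = n then a else 0)"

lemma bil_G0: "bil k (G0 k) x y = (\<Sum>i\<le>2*k. x i * y i * gk k i)"
  unfolding bil_def G0_def
  by (rule sum.cong[OF refl]) (auto simp: if_distrib cong: if_cong)

lemma gk_Suc: "gk k (Suc i) = gk k i * (of_nat (i+1) * (of_nat (2*k) - of_nat i))"
  by (simp add: gk_def)

lemma G0_e: "bil k (G0 k) (e_act k x) y = bil k (G0 k) x (f_act k y)"
proof (cases k)
  case 0 then show ?thesis by (simp add: bil_G0 e_act_def f_act_def)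
next
  case (Suc M')
  define M where "M = 2*k - 1"
  have N: "2*k = Suc M" using Suc M_def by simp
  have "bil k (G0 k) (e_act k x) y = (\<Sum>i\<le>Suc M. e_act k x i * y i * gk k i)"
    by (simp add: bil_G0 N)
  also have "\<dots> = (\<Sum>i\<le>M. e_act k x i * y i * gk k i)"
    by (simp add: e_act_def N)
  also have "\<dots> = (\<Sum>i\<le>M. x (Suc i) * y i * gk k (Suc i))"
    by (rule sum.cong[OF refl]) (use Suc in \<open>auto simp: e_act_def N gk_Suc algebra_simps M_def\<close>)
  also have "\<dots> = (\<Sum>i\<le>Suc M. x i * f_act k y i * gk k i)"
    by (subst sum.atMost_Suc_shift) (simp add: f_act_def N)
  also have "\<dots> = bil k (G0 k) x (f_act k y)" by (simp add: bil_G0 N)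
  finally show ?thesis .
qed

lemma G0_f: "bil k (G0 k) (f_act k x) y = bil k (G0 k) x (e_act k y)"
proof -
  have "bil k (G0 k) (f_act k x) y = bil k (G0 k) y (f_act k x)"
    unfolding bil_G0 by (rule sum.cong[OF refl]) simp
  also have "\<dots> = bil k (G0 k) (e_act k y) x" by (rule G0_e[symmetric])
  also have "\<dots> = bil k (G0 k) x (e_act k y)"
    unfolding bil_G0 by (rule sum.cong[OF refl]) simp
  finally show ?thesis .
qed

lemma G0_h: "bil k (G0 k) (h_act k x) y = bil k (G0 k) x (h_act k y)"
  unfolding bil_G0 by (rule sum.cong[OF refl]) (simp add: h_act_def)

lemma G0_gram: "is_shap_gram k (G0 k)"
  unfolding is_shap_gram_def using G0_e G0_f G0_h
  by (auto simp: G0_def gk_def)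

lemma bil_dl: "i \<le> 2*k \<Longrightarrow> j \<le> 2*k \<Longrightarrow> bil k G (dl i a) (dl j b) = a * b * G i j"
proof -
  assume i: "i \<le> 2*k" and j: "j \<le> 2*k"
  have inner: "(\<Sum>jj\<le>2*k. dl i a ii * dl j b jj * G ii jj) = dl i a ii * b * G ii j" for ii
  proof -
    have "(\<Sum>jj\<le>2*k. dl i a ii * dl j b jj * G ii jj) = dl i a ii * dl j b j * G ii j
          + (\<Sum>jj\<in>{..2*k}-{j}. dl i a ii * dl j b jj * G ii jj)"
      using j by (subst sum.remove[of _ j]) auto
    also have "(\<Sum>jj\<in>{..2*k}-{j}. dl i a ii * dl j b jj * G ii jj) = 0"
      by (rule sum.neutral) (auto simp: dl_def)
    finally show ?thesis by (simp add: dl_def)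
  qed
  have "bil k G (dl i a) (dl j b) = (\<Sum>ii\<le>2*k. dl i a ii * b * G ii j)"
    unfolding bil_def using inner by simp
  also have "\<dots> = dl i a i * b * G i j
          + (\<Sum>ii\<in>{..2*k}-{i}. dl i a ii * b * G ii j)"
      using i by (subst sum.remove[of _ i]) auto
  also have "(\<Sum>ii\<in>{..2*k}-{i}. dl i a ii * b * G ii j) = 0"
      by (rule sum.neutral) (auto simp: dl_def)
  finally show ?thesis by (simp add: dl_def)
qed

lemma gram_unique:
  assumes G: "is_shap_gram k G" shows "G = G0 k"
proof -
  have off: "G i j = 0" if "i \<le> 2*k" "j \<le> 2*k" "i \<noteq> j" for i j
  proof -
    have hd: "h_act k (dl n a) = dl n ((of_nat (2*k) - 2 * of_nat n) * a)" if "n \<le> 2*k" for n a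
      using that by (auto simp: h_act_def dl_def)
    have "bil k G (h_act k (dl i 1)) (dl j 1) = bil k G (dl i 1) (h_act k (dl j 1))"
      using G by (simp add: is_shap_gram_def)
    then have "(of_nat (2*k) - 2 * of_nat i) * G i j = (of_nat (2*k) - 2 * of_nat j) * G i j"
      using that by (simp add: hd bil_dl)
    then have "G i j = 0 \<or> j = i" by (simp, blast)
    then show ?thesis using that(3) by auto
  qed
  have diag: "G i i = gk k i" if "i \<le> 2*k" for i
    using that
  proof (induction i)
    case 0 then show ?case using G by (simp add: is_shap_gram_def gk_def)
  next
    case (Suc i)
    have ed: "e_act k (dl (Suc i) 1) = dl i (of_nat (i+1) * (of_nat (2*k) - of_nat i))"
      using Suc.prems by (intro ext) (auto simp: e_act_def dl_def)
    have fd: "f_act k (dl i 1) = dl (Suc i) 1"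
      using Suc.prems by (intro ext) (auto simp: f_act_def dl_def)
    have "bil k G (e_act k (dl (Suc i) 1)) (dl i 1) = bil k G (dl (Suc i) 1) (f_act k (dl i 1))"
      using G by (simp add: is_shap_gram_def)
    then have "of_nat (i+1) * (of_nat (2*k) - of_nat i) * G i i = G (Suc i) (Suc i)"
      using Suc.prems by (simp add: ed fd bil_dl)
    then show ?case using Suc by (simp add: gk_Suc mult_ac)
  qed
  show ?thesis
  proof (intro ext)
    fix i j
    show "G i j = G0 k i j"
    proof (cases "2*k < i \<or> 2*k < j")
      case True then show ?thesis using G by (auto simp: is_shap_gram_def G0_def)
    next
      case False then show ?thesis using off diag by (auto simp: G0_def)
    qed
  qed
qed

lemma the_gram: "(THE G. is_shap_gram k G) = G0 k"
  using G0_gram gram_unique by blast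

lemma shap_eq: "shap k x y = (\<Sum>i\<le>2*k. x i * y i * gk k i)"
  by (simp add: shap_def the_gram bil_G0)

definition aa :: "nat \<Rightarrow> nat \<Rightarrow> complex" where
  "aa k m = (\<Prod>r<m. of_nat (k - r) * of_nat (k + r + 1))"

lemma dl_zero: "dl n 0 = (\<lambda>_. 0)" by (auto simp: dl_def)

lemma e_dl: "n \<le> 2*k \<Longrightarrow> e_act k (dl n v) = dl (n - 1) (of_nat n * (of_nat (2*k) - of_nat (n - 1)) * v)"
  by (intro ext) (auto simp: e_act_def dl_def)

lemma aa_Suc: "aa k (Suc m) = aa k m * (of_nat (k - m) * of_nat (k + m + 1))"
  by (simp add: aa_def)

lemma aa_zero: "k < m \<Longrightarrow> aa k m = 0"
  unfolding aa_def by (rule prod_zero) (auto intro: bexI[of _ k])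

lemma eneg_pow: "k \<le> 2*k \<Longrightarrow> ((\<lambda>x. - e_act k x) ^^ m) (dl k c) = dl (k - m) ((-1)^m * aa k m * c)"
proof (induction m)
  case 0 then show ?case by (simp add: aa_def)
next
  case (Suc m)
  show ?case
  proof (cases "m < k")
    case True
    have "((\<lambda>x. - e_act k x) ^^ Suc m) (dl k c) = - e_act k (dl (k - m) ((-1)^m * aa k m * c))"
      unfolding funpow.simps o_apply Suc.IH[OF Suc.prems] ..
    also have "\<dots> = dl (k - Suc m) ((-1)^Suc m * aa k (Suc m) * c)"
      using True by (subst e_dl) (auto simp: dl_def aa_Suc of_nat_diff algebra_simps intro!: ext)
    finally show ?thesis .
  next
    case False
    have "((\<lambda>x. - e_act k x) ^^ Suc m) (dl k c) = - e_act k (dl 0 ((-1)^m * aa k m * c))"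
      unfolding funpow.simps o_apply Suc.IH[OF Suc.prems] using False by simp
    also have "\<dots> = dl (k - Suc m) ((-1)^Suc m * aa k (Suc m) * c)"
      using False by (subst e_dl) (auto simp: dl_def aa_Suc intro!: ext)
    finally show ?thesis .
  qed
qed

lemma f_dl: "Suc n \<le> 2*k \<Longrightarrow> f_act k (dl n v) = dl (Suc n) v"
  by (intro ext) (auto simp: f_act_def dl_def)

lemma f_pow_dl: "n + j \<le> 2*k \<Longrightarrow> (f_act k ^^ j) (dl n v) = dl (n + j) v"
  by (induction j) (auto simp: f_dl)

lemma f_pow_zero: "(f_act k ^^ j) (\<lambda>_. 0) = (\<lambda>_. 0)"
  by (induction j) (auto simp: f_act_def)

lemma fe_term: "(f_act k ^^ j) (((\<lambda>x. - e_act k x) ^^ j) (dl k c)) = dl k ((-1)^j * aa k j * c)"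
proof (cases "j \<le> k")
  case True
  then show ?thesis by (simp add: eneg_pow f_pow_dl)
next
  case False
  then show ?thesis by (simp add: eneg_pow aa_zero dl_zero f_pow_zero)
qed

definition psicoef :: "nat \<Rightarrow> complex \<Rightarrow> complex \<Rightarrow> complex" where
  "psicoef k xi1 X = (\<Sum>j\<le>2*k. inverse (shapU (xi1 - 1) j j) * AX_coeff X j * ((-1)^j * aa k j))"

lemma psi_dl: "psi k xi1 (dl k c) y =
   dl k (exp (2 * pi * \<i> * (xi1 * y / 2)) * c * psicoef k xi1 (exp (- 2 * pi * \<i> * y)))"
proof (intro ext)
  fix i
  have "psi k xi1 (dl k c) y i = exp (2 * pi * \<i> * (xi1 * y / 2)) *
      (\<Sum>j\<le>2*k. inverse (shapU (xi1 - 1) j j) * AX_coeff (exp (- 2 * pi * \<i> * y)) j *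
         dl k ((-1)^j * aa k j * c) i)"
    unfolding psi_def Let_def shapU_inv_def
    by (simp add: if_distrib[of "\<lambda>z. z * _"] sum.delta fe_term cong: if_cong)
  also have "\<dots> = dl k (exp (2 * pi * \<i> * (xi1 * y / 2)) * c * psicoef k xi1 (exp (- 2 * pi * \<i> * y))) i"
    by (auto simp: dl_def psicoef_def sum_distrib_left sum_distrib_right mult_ac)
  finally show "psi k xi1 (dl k c) y i = \<dots>" .
qed

lemma shap_dl: "shap k (dl k a) (dl k b) = a * b * gk k k"
proof -
  have "shap k (dl k a) (dl k b) = (\<Sum>i\<le>2*k. dl k a i * dl k b i * gk k i)" by (rule shap_eq)
  also have "\<dots> = dl k a k * dl k b k * gk k k + (\<Sum>i\<in>{..2*k}-{k}. dl k a i * dl k b i * gk k i)"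
    by (subst sum.remove[of _ k]) auto
  also have "(\<Sum>i\<in>{..2*k}-{k}. dl k a i * dl k b i * gk k i) = 0"
    by (rule sum.neutral) (auto simp: dl_def)
  finally show ?thesis by (simp add: dl_def)
qed

lemma bethe_dl: "bethe_vec k t = dl k (\<Prod>j=1..k. 1 / (t j - 1))"
  by (intro ext) (simp add: bethe_vec_def dl_def)

definition majl :: "nat list \<Rightarrow> nat" where
  "majl xs = (\<Sum>j\<in>{1..<length xs}. if xs!(j-1) > xs!j then j else 0)"

lemma majl_snoc: "majl (ys @ [x]) = majl ys + (if ys \<noteq> [] \<and> last ys > x then length ys else 0)"
proof -
  have "majl (ys @ [x]) = (\<Sum>j\<in>{1..<Suc (length ys)}. if (ys@[x])!(j-1) > (ys@[x])!j then j else 0)"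
    by (simp add: majl_def)
  also have "\<dots> = (if length ys < 1 then 0 else
      (\<Sum>j\<in>{1..<length ys}. if (ys@[x])!(j-1) > (ys@[x])!j then j else 0) +
      (if (ys@[x])!(length ys - 1) > (ys@[x])!(length ys) then length ys else 0))"
    by (simp only: sum.op_ivl_Suc)
  also have "(\<Sum>j\<in>{1..<length ys}. if (ys@[x])!(j-1) > (ys@[x])!j then j else 0) = majl ys"
    unfolding majl_def by (rule sum.cong) (auto simp: nth_append)
  finally show ?thesis
    by (cases ys rule: rev_cases) (auto simp: nth_append majl_def)
qed

definition ins :: "nat \<Rightarrow> nat \<Rightarrow> nat list \<Rightarrow> nat list" where
  "ins p z xs = take p xs @ z # drop p xs"

definition GS :: "'a::comm_ring_1 \<Rightarrow> nat \<Rightarrow> 'a" where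
  "GS q n = (\<Sum>i\<le>n. q^i)"

lemma ins_snoc: "p \<le> length ys \<Longrightarrow> ins p z (ys @ [x]) = ins p z ys @ [x]"
  by (simp add: ins_def)

lemma ins_end: "ins (length xs) z xs = xs @ [z]"
  by (simp add: ins_def)

lemma last_ins: "p \<le> length ys \<Longrightarrow> last (ins p z ys) = (if p < length ys then last ys else z)"
  by (auto simp: ins_def last_append)

lemma length_ins: "p \<le> length xs \<Longrightarrow> length (ins p z xs) = Suc (length xs)"
  by (simp add: ins_def)

lemma ins_ne: "ins p z xs \<noteq> []"
  by (simp add: ins_def)

lemma ins_sum:
  fixes q :: "'a::comm_ring_1"
  assumes "\<forall>a\<in>set xs. a < z"
  shows "(\<Sum>p\<le>length xs. q ^ majl (ins p z xs)) = q ^ majl xs * GS q (length xs)"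
  using assms
proof (induction xs rule: rev_induct)
  case Nil then show ?case by (simp add: ins_def majl_def GS_def)
next
  case (snoc x ys)
  define n where "n = length ys"
  define M where "M = majl ys"
  define d where "d = (ys \<noteq> [] \<and> last ys > x)"
  have xz: "x < z" using snoc.prems by simp
  have IH: "(\<Sum>p\<le>n. q ^ majl (ins p z ys)) = q ^ M * GS q n"
    using snoc by (simp add: n_def M_def)
  have lz: "ys \<noteq> [] \<Longrightarrow> last ys < z"
  proof -
    assume "ys \<noteq> []"
    then have "last ys \<in> set ys" by simp
    then show ?thesis using snoc.prems by simp
  qed
  have insn: "majl (ins n z ys) = M"
    using lz by (auto simp add: n_def ins_end majl_snoc M_def)
  have IH': "(\<Sum>p<n. q ^ majl (ins p z ys)) = q ^ M * GS q n - q ^ M"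
    using IH insn by (simp add: lessThan_Suc_atMost[symmetric] eq_diff_eq)
  have t1: "majl (ins p z ys @ [x]) = majl (ins p z ys) + (if d then n + 1 else 0)" if "p < n" for p
    using that by (auto simp: majl_snoc last_ins d_def n_def ins_ne length_ins)
  have t2: "majl (ins n z ys @ [x]) = M + n + 1"
    using xz insn by (simp add: majl_snoc last_ins ins_ne length_ins n_def)
  have mx: "majl (ys @ [x]) = M + (if d then n else 0)"
    by (simp add: majl_snoc M_def d_def n_def)
  have e3: "ins (Suc n) z (ys @ [x]) = (ys@[x])@[z]" by (simp add: ins_def n_def)
  have e4: "majl ((ys@[x])@[z]) = majl (ys@[x])" by (subst majl_snoc) (use xz in auto)
  have t3: "majl (ins (Suc n) z (ys @ [x])) = M + (if d then n else 0)"
    using e3 e4 mx by simp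
  have "(\<Sum>p\<le>length (ys @ [x]). q ^ majl (ins p z (ys @ [x])))
      = (\<Sum>p<n. q ^ majl (ins p z ys @ [x])) + q ^ majl (ins n z ys @ [x]) + q ^ majl (ins (Suc n) z (ys @ [x]))"
    by (simp add: n_def lessThan_Suc_atMost[symmetric] ins_snoc)
  also have "(\<Sum>p<n. q ^ majl (ins p z ys @ [x])) = (\<Sum>p<n. q ^ majl (ins p z ys)) * q ^ (if d then n + 1 else 0)"
    by (simp add: sum_distrib_right t1 power_add)
  finally have eq: "(\<Sum>p\<le>length (ys @ [x]). q ^ majl (ins p z (ys @ [x])))
     = (q ^ M * GS q n - q ^ M) * q ^ (if d then n + 1 else 0) + q ^ (M + n + 1) + q ^ (M + (if d then n else 0))"
    by (simp add: IH' t2 t3)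
  have GSs: "GS q (Suc n) = GS q n + q ^ Suc n" "GS q (Suc n) = 1 + q * GS q n"
    by (simp add: GS_def) (simp add: GS_def sum.atMost_Suc_shift sum_distrib_left del: sum.atMost_Suc)
  have ln: "length (ys @ [x]) = Suc n" by (simp add: n_def)
  have fin: "(q ^ M * GS q n - q ^ M) * q ^ (if d then n + 1 else 0) + q ^ (M + n + 1) + q ^ (M + (if d then n else 0))
     = q ^ (M + (if d then n else 0)) * GS q (Suc n)"
  proof (cases d)
    case True then show ?thesis by (simp add: GSs(2) power_add algebra_simps)
  next
    case False then show ?thesis by (simp add: GSs(1) power_add algebra_simps)
  qed
  show ?case unfolding mx using eq[unfolded fin] by (simp only: ln)
qed

lemma ins_inj:
  assumes "z \<notin> set xs" "z \<notin> set xs'" "p \<le> length xs" "p' \<le> length xs'"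
    and "ins p z xs = ins p' z xs'"
  shows "xs = xs' \<and> p = p'"
proof -
  have h1: "z \<notin> set (take p xs)" using assms(1) by (meson in_set_takeD)
  have h2: "z \<notin> set (drop p xs)" using assms(1) by (meson in_set_dropD)
  have e: "take p xs @ z # drop p xs = take p' xs' @ z # drop p' xs'"
    using assms(5) by (simp add: ins_def)
  have td: "take p xs = take p' xs' \<and> drop p xs = drop p' xs'"
    by (rule append_Cons_eq_iff[OF h1 h2, THEN iffD1, OF e])
  have l: "length (take p xs) = p" "length (take p' xs') = p'" using assms(3,4) by auto
  have "p = p'" using td l by simp
  moreover have "xs = xs'"
    using td append_take_drop_id[of p xs] append_take_drop_id[of p' xs'] by simp
  ultimately show ?thesis by simp
qed

lemma PS_decomp:
  assumes "finite A" "z \<in> A" "\<forall>a\<in>A. a \<le> z"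
  shows "permutations_of_set A = (\<lambda>(xs,p). ins p z xs) ` (SIGMA xs:permutations_of_set (A - {z}). {..length xs})"
proof (intro set_eqI iffI)
  fix L assume L: "L \<in> permutations_of_set A"
  then have "z \<in> set L" using assms permutations_of_setD(1) by blast
  then obtain us vs where uv: "L = us @ z # vs" by (meson split_list)
  have d: "distinct L" "set L = A" using L permutations_of_setD by blast+
  have "us @ vs \<in> permutations_of_set (A - {z})"
    using d uv by (intro permutations_of_setI) auto
  moreover have "ins (length us) z (us @ vs) = L" using uv by (simp add: ins_def)
  ultimately show "L \<in> (\<lambda>(xs,p). ins p z xs) ` (SIGMA xs:permutations_of_set (A - {z}). {..length xs})"
    by (intro image_eqI[of _ _ "(us @ vs, length us)"]) auto
next
  fix L assume "L \<in> (\<lambda>(xs,p). ins p z xs) ` (SIGMA xs:permutations_of_set (A - {z}). {..length xs})"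
  then obtain xs p where xp: "xs \<in> permutations_of_set (A - {z})" "p \<le> length xs" "L = ins p z xs"
    by auto
  have d: "distinct xs" "set xs = A - {z}" using xp(1) permutations_of_setD by blast+
  have st: "set (take p xs) \<union> set (drop p xs) = A - {z}"
    using d by (metis append_take_drop_id set_append)
  have "set L = A" using xp(3) st assms(2) unfolding ins_def by auto
  moreover have "distinct L"
  proof -
    have "distinct (take p xs @ drop p xs)" using d by simp
    then have h: "distinct (take p xs) \<and> distinct (drop p xs) \<and> set (take p xs) \<inter> set (drop p xs) = {}"
      by (simp only: distinct_append)
    moreover have "z \<notin> set (take p xs)" "z \<notin> set (drop p xs)" using st by auto
    ultimately show ?thesis using xp(3) unfolding ins_def by auto
  qed
  ultimately show "L \<in> permutations_of_set A" by auto
qed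

lemma perm_sum:
  fixes q :: "'a::comm_ring_1"
  assumes "finite A"
  shows "(\<Sum>L\<in>permutations_of_set A. q ^ majl L) = (\<Prod>i<card A. GS q i)"
  using assms
proof (induction "card A" arbitrary: A)
  case 0
  then have "A = {}" by simp
  then show ?case by (simp add: majl_def)
next
  case (Suc n)
  then have ne: "A \<noteq> {}" by auto
  define z where "z = Max A"
  have zA: "z \<in> A" "\<forall>a\<in>A. a \<le> z" using Suc.prems ne by (auto simp: z_def)
  define A' where "A' = A - {z}"
  have cA': "card A' = n" using Suc zA by (simp add: A'_def)
  have fA': "finite A'" using Suc by (simp add: A'_def)
  have inj: "inj_on (\<lambda>(xs,p). ins p z xs) (SIGMA xs:permutations_of_set A'. {..length xs})"
  proof (rule inj_onI)
    fix u v
    assume uv: "u \<in> (SIGMA xs:permutations_of_set A'. {..length xs})" "v \<in> (SIGMA xs:permutations_of_set A'. {..length xs})"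
      "(\<lambda>(xs,p). ins p z xs) u = (\<lambda>(xs,p). ins p z xs) v"
    obtain xs p where u: "u = (xs,p)" by (cases u)
    obtain xs' p' where v: "v = (xs',p')" by (cases v)
    have a: "xs \<in> permutations_of_set A'" "p \<le> length xs" "xs' \<in> permutations_of_set A'"
      "p' \<le> length xs'" "ins p z xs = ins p' z xs'" using uv u v by auto
    have "z \<notin> set xs" "z \<notin> set xs'" using a(1,3) permutations_of_setD(1) A'_def by blast+
    then have "xs = xs' \<and> p = p'" using ins_inj[OF _ _ a(2) a(4) a(5)] by blast
    then show "u = v" using u v by simp
  qed
  have lenxs: "length xs = n" if "xs \<in> permutations_of_set A'" for xs
    using that cA' permutations_of_setD distinct_card by metis
  have lt: "\<forall>a\<in>set xs. a < z" if "xs \<in> permutations_of_set A'" for xs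
    using that zA permutations_of_setD(1) A'_def by fastforce
  have "(\<Sum>L\<in>permutations_of_set A. q ^ majl L)
      = (\<Sum>L\<in>(\<lambda>(xs,p). ins p z xs) ` (SIGMA xs:permutations_of_set A'. {..length xs}). q ^ majl L)"
    using PS_decomp[OF Suc.prems zA] by (simp add: A'_def)
  also have "\<dots> = (\<Sum>(xs,p)\<in>(SIGMA xs:permutations_of_set A'. {..length xs}). q ^ majl (ins p z xs))"
    by (subst sum.reindex[OF inj]) (simp add: case_prod_unfold)
  also have "\<dots> = (\<Sum>xs\<in>permutations_of_set A'. \<Sum>p\<le>length xs. q ^ majl (ins p z xs))"
    by (subst sum.Sigma) (auto simp: fA')
  also have "\<dots> = (\<Sum>xs\<in>permutations_of_set A'. q ^ majl xs * GS q n)"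
  proof (rule sum.cong[OF refl])
    fix xs assume xs: "xs \<in> permutations_of_set A'"
    show "(\<Sum>p\<le>length xs. q ^ majl (ins p z xs)) = q ^ majl xs * GS q n"
      using ins_sum[OF lt[OF xs], of q] lenxs[OF xs] by simp
  qed
  also have "\<dots> = (\<Prod>i<card A'. GS q i) * GS q n"
  proof -
    have IH: "(\<Sum>L\<in>permutations_of_set A'. q ^ majl L) = (\<Prod>i<card A'. GS q i)"
      using Suc.hyps(1)[of A'] cA' fA' by simp
    show ?thesis by (simp add: sum_distrib_right[symmetric] IH)
  qed
  finally show ?case using Suc.hyps(2)[symmetric] cA' by simp
qed

lemma dc_sum:
  "(\<Sum>k=1..m. desc_count \<sigma> m k) = (\<Sum>j\<in>{j\<in>{1..<m}. \<sigma> (j+1) < \<sigma> j}. j)"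
proof -
  define D where "D = {j\<in>{1..<m}. \<sigma> (j+1) < \<sigma> j}"
  have fD: "finite D" by (simp add: D_def)
  have c: "desc_count \<sigma> m k = (\<Sum>j\<in>D. if k \<le> j then 1 else 0)" if "k \<in> {1..m}" for k
  proof -
    have "{j. k \<le> j \<and> j \<le> m - 1 \<and> \<sigma> j > \<sigma> (j+1)} = {j\<in>D. k \<le> j}"
      using that by (auto simp: D_def)
    then show ?thesis using fD by (simp add: desc_count_def sum.inter_filter[symmetric])
  qed
  have "(\<Sum>k=1..m. desc_count \<sigma> m k) = (\<Sum>k=1..m. \<Sum>j\<in>D. if k \<le> j then 1 else 0)"
    by (rule sum.cong[OF refl]) (rule c)
  also have "\<dots> = (\<Sum>j\<in>D. \<Sum>k=1..m. if k \<le> j then 1 else 0)"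
    by (rule sum.swap)
  also have "\<dots> = (\<Sum>j\<in>D. j)"
  proof (rule sum.cong[OF refl])
    fix j assume "j \<in> D"
    then have jm: "j < m" by (auto simp: D_def)
    have "(\<Sum>k=1..m. if k \<le> j then 1 else (0::nat)) = card {k\<in>{1..m}. k \<le> j}"
      by (simp add: sum.inter_filter[symmetric])
    also have "{k\<in>{1..m}. k \<le> j} = {1..j}" using jm by auto
    finally show "(\<Sum>k=1..m. if k \<le> j then 1 else (0::nat)) = j" by simp
  qed
  finally show ?thesis by (simp add: D_def)
qed

lemma majl_map: "majl (map \<sigma> [1..<Suc m]) = (\<Sum>j\<in>{j\<in>{1..<m}. \<sigma> (j+1) < \<sigma> j}. j)"
proof -
  have "majl (map \<sigma> [1..<Suc m]) = (\<Sum>j\<in>{1..<m}. if \<sigma> (j+1) < \<sigma> j then j else 0)"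
    unfolding majl_def by (rule sum.cong) (auto simp del: upt_Suc simp add: nth_map)
  also have "\<dots> = (\<Sum>j\<in>{j\<in>{1..<m}. \<sigma> (j+1) < \<sigma> j}. j)"
    by (subst sum.inter_filter) auto
  finally show ?thesis .
qed

lemma perm_list_bij:
  "bij_betw (\<lambda>\<sigma>. map \<sigma> [1..<Suc m]) {\<sigma>. \<sigma> permutes {1..m}} (permutations_of_set {1..m})"
  unfolding bij_betw_def
proof (intro conjI)
  show "inj_on (\<lambda>\<sigma>. map \<sigma> [1..<Suc m]) {\<sigma>. \<sigma> permutes {1..m}}"
  proof (rule inj_onI)
    fix \<sigma> \<tau> assume s: "\<sigma> \<in> {\<sigma>. \<sigma> permutes {1..m}}" "\<tau> \<in> {\<sigma>. \<sigma> permutes {1..m}}"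
      and e: "map \<sigma> [1..<Suc m] = map \<tau> [1..<Suc m]"
    show "\<sigma> = \<tau>"
    proof
      fix i show "\<sigma> i = \<tau> i"
      proof (cases "i \<in> {1..m}")
        case True then show ?thesis using e by (auto simp del: upt_Suc simp: map_eq_conv)
      next
        case False then show ?thesis using s by (simp add: permutes_not_in)
      qed
    qed
  qed
  show "(\<lambda>\<sigma>. map \<sigma> [1..<Suc m]) ` {\<sigma>. \<sigma> permutes {1..m}} = permutations_of_set {1..m}"
  proof (intro set_eqI iffI)
    fix L assume "L \<in> (\<lambda>\<sigma>. map \<sigma> [1..<Suc m]) ` {\<sigma>. \<sigma> permutes {1..m}}"
    then obtain \<sigma> where s: "\<sigma> permutes {1..m}" "L = map \<sigma> [1..<Suc m]" by auto
    have "set L = {1..m}" using s permutes_image[OF s(1)]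
      by (simp del: upt_Suc add: atLeastLessThanSuc_atLeastAtMost)
    moreover have "distinct L" using s permutes_inj_on[OF s(1)]
      by (simp del: upt_Suc add: distinct_map)
    ultimately show "L \<in> permutations_of_set {1..m}" by auto
  next
    fix L assume L: "L \<in> permutations_of_set {1..m}"
    have d: "distinct L" "set L = {1..m}" using L permutations_of_setD by blast+
    have len: "length L = m" using d distinct_card by fastforce
    define \<sigma> where "\<sigma> i = (if i \<in> {1..m} then L ! (i - 1) else i)" for i
    have bij: "bij_betw \<sigma> {1..m} {1..m}"
      unfolding bij_betw_def
    proof
      show "inj_on \<sigma> {1..m}"
      proof (rule inj_onI)
        fix i j assume ij: "i \<in> {1..m}" "j \<in> {1..m}" "\<sigma> i = \<sigma> j"
        then have "L ! (i - 1) = L ! (j - 1)" by (simp add: \<sigma>_def)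
        then have "i - 1 = j - 1" using d(1) len ij(1,2) nth_eq_iff_index_eq by fastforce
        then show "i = j" using ij by auto
      qed
      show "\<sigma> ` {1..m} = {1..m}"
      proof (intro set_eqI iffI)
        fix y assume "y \<in> \<sigma> ` {1..m}"
        then obtain i where "i \<in> {1..m}" "y = L ! (i - 1)" by (auto simp: \<sigma>_def)
        then have "y \<in> set L" using len by auto
        then show "y \<in> {1..m}" using d by simp
      next
        fix y assume "y \<in> {1..m}"
        then have "y \<in> set L" using d by simp
        then obtain i where i: "i < m" "y = L ! i" using len by (auto simp: in_set_conv_nth)
        then have "\<sigma> (Suc i) = y" by (simp add: \<sigma>_def)
        moreover have "Suc i \<in> {1..m}" using i by simp
        ultimately show "y \<in> \<sigma> ` {1..m}" by blast
      qed
    qed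
    have p: "\<sigma> permutes {1..m}"
      by (rule bij_imp_permutes[OF bij]) (auto simp add: \<sigma>_def)
    have "map \<sigma> [1..<Suc m] = L"
      by (rule nth_equalityI) (auto simp del: upt_Suc simp: len \<sigma>_def nth_map)
    then show "L \<in> (\<lambda>\<sigma>. map \<sigma> [1..<Suc m]) ` {\<sigma>. \<sigma> permutes {1..m}}"
      using p by blast
  qed
qed

lemma GS_prod: "(\<Prod>i<m. GS X i) * (1 - X)^m = (\<Prod>k=1..m. 1 - X^k)"
proof (induction m)
  case 0 then show ?case by simp
next
  case (Suc m)
  have "1 - X ^ Suc m = (1 - X) * GS X m"
    using one_diff_power_eq[of X "Suc m"] by (simp only: GS_def lessThan_Suc_atMost)
  have "(\<Prod>i<Suc m. GS X i) * (1 - X)^Suc m = ((\<Prod>i<m. GS X i) * (1 - X)^m) * ((1 - X) * GS X m)"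
    by (simp add: algebra_simps)
  also have "\<dots> = (\<Prod>k=1..m. 1 - X^k) * (1 - X ^ Suc m)"
    using Suc \<open>1 - X ^ Suc m = (1 - X) * GS X m\<close> by simp
  also have "\<dots> = (\<Prod>k=1..Suc m. 1 - X^k)" by simp
  finally show ?case .
qed

lemma AX_eq:
  fixes X :: complex
  assumes "\<forall>k\<in>{1..m}. X^k \<noteq> 1"
  shows "AX_coeff X m = X^m / (1 - X)^m"
proof -
  define Pm where "Pm = (\<Prod>k=1..m. 1 - X^k)"
  have Pm0: "Pm \<noteq> 0" using assms by (simp add: Pm_def)
  have tm: "(\<Prod>k=1..m. X ^ (desc_count \<sigma> m k + 1) / (1 - X ^ k))
      = X^m * X ^ majl (map \<sigma> [1..<Suc m]) / Pm" for \<sigma>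
  proof -
    have "(\<Prod>k=1..m. X ^ (desc_count \<sigma> m k + 1) / (1 - X ^ k))
        = X ^ (\<Sum>k=1..m. desc_count \<sigma> m k + 1) / Pm"
      by (simp add: prod_dividef power_sum Pm_def)
    also have "(\<Sum>k=1..m. desc_count \<sigma> m k + 1) = m + majl (map \<sigma> [1..<Suc m])"
    proof -
      have "(\<Sum>k=1..m. desc_count \<sigma> m k + 1) = (\<Sum>k=1..m. desc_count \<sigma> m k) + m"
        by (simp only: sum.distrib) simp
      then show ?thesis by (simp only: dc_sum majl_map)
    qed
    finally show ?thesis by (simp add: power_add)
  qed
  have "AX_coeff X m = (\<Sum>\<sigma>\<in>{\<sigma>. \<sigma> permutes {1..m}}. X^m * X ^ majl (map \<sigma> [1..<Suc m]) / Pm)"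
    unfolding AX_coeff_def by (rule sum.cong[OF refl]) (rule tm)
  also have "\<dots> = X^m / Pm * (\<Sum>\<sigma>\<in>{\<sigma>. \<sigma> permutes {1..m}}. X ^ majl (map \<sigma> [1..<Suc m]))"
    by (simp add: sum_distrib_left)
  also have "(\<Sum>\<sigma>\<in>{\<sigma>. \<sigma> permutes {1..m}}. X ^ majl (map \<sigma> [1..<Suc m]))
      = (\<Sum>L\<in>permutations_of_set {1..m}. X ^ majl L)"
    by (rule sum.reindex_bij_betw[OF perm_list_bij])
  also have "\<dots> = (\<Prod>i<m. GS X i)" by (simp add: perm_sum)
  finally have A: "AX_coeff X m = X^m / Pm * (\<Prod>i<m. GS X i)" .
  have "(\<Prod>i<m. GS X i) * (1 - X)^m = Pm" by (simp add: GS_prod Pm_def)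
  then have e: "Pm = (\<Prod>i<m. GS X i) * (1 - X)^m" by simp
  have nz: "(\<Prod>i<m. GS X i) \<noteq> 0" "(1 - X)^m \<noteq> 0" using Pm0 unfolding e by auto
  show ?thesis unfolding A e using nz by (simp add: field_simps)
qed

definition Xc :: "real \<Rightarrow> complex \<Rightarrow> complex" where
  "Xc \<delta> z = exp (- 2 * pi * \<i> * (z - \<i> * of_real \<delta>))"

definition Wc :: "real \<Rightarrow> complex \<Rightarrow> complex" where
  "Wc \<delta> z = 1 / (1 - Xc \<delta> z)"

lemma Xc_deriv: "(Xc \<delta> has_field_derivative (- 2 * pi * \<i>) * Xc \<delta> z) (at z)"
  unfolding Xc_def by (auto intro!: derivative_eq_intros)

lemma norm_Xc: "cmod (Xc \<delta> (of_real x)) = exp (- 2 * pi * \<delta>)"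
  by (simp add: Xc_def norm_exp_eq_Re algebra_simps)

lemma Xc_per: "Xc \<delta> (of_real 1) = Xc \<delta> (of_real 0)"
proof -
  have "Xc \<delta> (of_real 1) = exp (- 2 * pi * \<i> * (0 - \<i> * of_real \<delta>) + (- (2 * of_real pi * \<i>)))"
    unfolding Xc_def by (simp add: algebra_simps)
  also have "\<dots> = Xc \<delta> (of_real 0)"
    unfolding exp_add Xc_def exp_minus by simp
  finally show ?thesis .
qed

lemma Xc_lt1: "\<delta> > 0 \<Longrightarrow> cmod (Xc \<delta> (of_real x)) < 1"
  by (simp add: norm_Xc)

lemma Wc_deriv:
  assumes "Xc \<delta> z \<noteq> 1"
  shows "(Wc \<delta> has_field_derivative (- 2 * pi * \<i>) * (Wc \<delta> z ^ 2 - Wc \<delta> z)) (at z)"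
proof -
  have "((\<lambda>z. 1 / (1 - Xc \<delta> z)) has_field_derivative
      - (0 - (- 2 * pi * \<i>) * Xc \<delta> z) / (1 - Xc \<delta> z)^2) (at z)"
    using assms by (auto intro!: derivative_eq_intros Xc_deriv simp: power2_eq_square)
  moreover have "- (0 - (- 2 * pi * \<i>) * Xc \<delta> z) / (1 - Xc \<delta> z)^2
      = (- 2 * pi * \<i>) * (Wc \<delta> z ^ 2 - Wc \<delta> z)"
  proof -
    define u where "u = 1 - Xc \<delta> z"
    have u: "u \<noteq> 0" using assms by (simp add: u_def)
    have X: "Xc \<delta> z = 1 - u" by (simp add: u_def)
    show ?thesis unfolding Wc_def X using u by (simp add: field_simps power2_eq_square)
  qed
  ultimately show ?thesis unfolding Wc_def by simp
qed

lemma Wc_Re_pos: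
  assumes "\<delta> > 0" shows "Re (Wc \<delta> (of_real x)) > 0"
proof -
  define X where "X = Xc \<delta> (of_real x)"
  have "cmod X < 1" using Xc_lt1[OF assms] by (simp add: X_def)
  then have "Re X < 1" using complex_Re_le_cmod[of X] by linarith
  then have r: "Re (1 - X) > 0" by simp
  then have "(Re (1 - X))\<^sup>2 + (Im (1 - X))\<^sup>2 > 0"
    by (simp add: add_pos_nonneg)
  then show ?thesis using r unfolding Wc_def X_def[symmetric]
    by (simp add: divide_inverse inverse_complex.sel(1))
qed

lemma Xc_ne1: "\<delta> > 0 \<Longrightarrow> Xc \<delta> (of_real x) \<noteq> 1"
  using Xc_lt1[of \<delta> x] by auto

lemma Wc_per: "Wc \<delta> (of_real 1) = Wc \<delta> (of_real 0)"
  unfolding Wc_def using Xc_per by simp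

lemma step_int:
  assumes "\<delta> > 0"
  shows "((\<lambda>x. Wc \<delta> (of_real x) ^ Suc n - Wc \<delta> (of_real x) ^ n) has_integral 0) {0..1}"
proof -
  define c :: complex where "c = - 2 * pi * \<i>"
  have c0: "c \<noteq> 0" by (simp add: c_def)
  define H where "H z = (if n = 0 then Ln (Wc \<delta> z) / c else Wc \<delta> z ^ n / (c * of_nat n))" for z
  have HD: "(H has_field_derivative (Wc \<delta> (of_real x) ^ Suc n - Wc \<delta> (of_real x) ^ n)) (at (of_real x))" for x
  proof -
    have WD: "(Wc \<delta> has_field_derivative c * (Wc \<delta> (of_real x) ^ 2 - Wc \<delta> (of_real x))) (at (of_real x))"
      unfolding c_def by (rule Wc_deriv[OF Xc_ne1[OF assms]])
    show ?thesis
    proof (cases "n = 0")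
      case True
      have nn: "Wc \<delta> (of_real x) \<notin> \<real>\<^sub>\<le>\<^sub>0"
        using Wc_Re_pos[OF assms, of x] by (auto simp: complex_nonpos_Reals_iff)
      have w0: "Wc \<delta> (of_real x) \<noteq> 0" using Wc_Re_pos[OF assms, of x] by auto
      have "((\<lambda>z. Ln (Wc \<delta> z) / c) has_field_derivative
          inverse (Wc \<delta> (of_real x)) * (c * (Wc \<delta> (of_real x) ^ 2 - Wc \<delta> (of_real x))) / c) (at (of_real x))"
        by (intro DERIV_cdivide DERIV_chain'[OF WD] has_field_derivative_Ln nn)
      moreover have "inverse (Wc \<delta> (of_real x)) * (c * (Wc \<delta> (of_real x) ^ 2 - Wc \<delta> (of_real x))) / c
          = Wc \<delta> (of_real x) ^ Suc n - Wc \<delta> (of_real x) ^ n"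
        using True c0 w0 by (simp add: field_simps power2_eq_square)
      ultimately show ?thesis using True unfolding H_def by simp
    next
      case False
      have "((\<lambda>z. Wc \<delta> z ^ n / (c * of_nat n)) has_field_derivative
          of_nat n * (c * (Wc \<delta> (of_real x) ^ 2 - Wc \<delta> (of_real x)) * Wc \<delta> (of_real x) ^ (n - Suc 0)) / (c * of_nat n)) (at (of_real x))"
        by (intro DERIV_cdivide DERIV_power WD)
      moreover have "of_nat n * (c * (Wc \<delta> (of_real x) ^ 2 - Wc \<delta> (of_real x)) * Wc \<delta> (of_real x) ^ (n - Suc 0)) / (c * of_nat n)
          = Wc \<delta> (of_real x) ^ Suc n - Wc \<delta> (of_real x) ^ n"
      proof -
        obtain m where m: "n = Suc m" using False by (cases n) auto
        define w where "w = Wc \<delta> (of_real x)"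
        have nz: "c * of_nat n \<noteq> 0" using c0 False by simp
        have "of_nat n * (c * (w ^ 2 - w) * w ^ (n - Suc 0)) / (c * of_nat n)
            = (c * of_nat n) * ((w ^ 2 - w) * w ^ (n - Suc 0)) / (c * of_nat n)"
          by (simp add: mult_ac)
        also have "\<dots> = (w ^ 2 - w) * w ^ (n - Suc 0)" using nz by simp
        also have "\<dots> = w ^ Suc n - w ^ n" unfolding m by (simp add: algebra_simps power2_eq_square)
        finally show ?thesis unfolding w_def .
      qed
      ultimately show ?thesis using False unfolding H_def by simp
    qed
  qed
  have "((\<lambda>x. Wc \<delta> (of_real x) ^ Suc n - Wc \<delta> (of_real x) ^ n) has_integral
      (H (of_real 1) - H (of_real 0))) {0..1}"
    by (rule fundamental_theorem_of_calculus) (auto intro!: has_vector_derivative_real_field HD simp del: power_Suc)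
  moreover have "H (of_real 1) = H (of_real 0)" unfolding H_def using Wc_per by simp
  ultimately show ?thesis by simp
qed

lemma pow_int:
  assumes "\<delta> > 0"
  shows "((\<lambda>x. Wc \<delta> (of_real x) ^ n) has_integral 1) {0..1}"
proof (induction n)
  case 0
  show ?case using has_integral_const_real[of "1::complex" 0 1] by simp
next
  case (Suc n)
  have "((\<lambda>x. (Wc \<delta> (of_real x) ^ Suc n - Wc \<delta> (of_real x) ^ n) + Wc \<delta> (of_real x) ^ n) has_integral (0 + 1)) {0..1}"
    by (intro has_integral_add step_int[OF assms] Suc)
  then show ?case by simp
qed

lemma poly_int:
  assumes "\<delta> > 0"
  shows "((\<lambda>x. poly R (Wc \<delta> (of_real x))) has_integral poly R 1) {0..1}"
proof -
  have "((\<lambda>x. \<Sum>i\<le>degree R. coeff R i * Wc \<delta> (of_real x) ^ i) has_integral (\<Sum>i\<le>degree R. coeff R i * 1)) {0..1}"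
    by (intro has_integral_sum has_integral_mult_right pow_int[OF assms]) auto
  then show ?thesis by (simp add: poly_altdef)
qed

definition cp :: "nat \<Rightarrow> (nat \<Rightarrow> complex) \<Rightarrow> complex poly" where
  "cp k t = (\<Prod>j\<in>{1..k}. [:- t j, 1:])"

lemma poly_cp: "poly (cp k t) z = (\<Prod>j\<in>{1..k}. z - t j)"
  by (simp add: cp_def poly_prod)

lemma degree_cp: "degree (cp k t) = k"
  unfolding cp_def by (subst degree_prod_eq_sum_degree) auto

lemma lead_cp: "coeff (cp k t) k = 1"
proof -
  have "lead_coeff (cp k t) = 1" unfolding cp_def by (simp add: lead_coeff_prod)
  then show ?thesis by (simp add: degree_cp)
qed

lemma coeff_cp_high: "k < m \<Longrightarrow> coeff (cp k t) m = 0"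
  by (rule coeff_eq_0) (simp add: degree_cp)

lemma logder:
  fixes t :: "nat \<Rightarrow> complex"
  assumes "finite S" "\<forall>l\<in>S. z \<noteq> t l"
  shows "poly (pderiv (\<Prod>l\<in>S. [:- t l, 1:])) z = (\<Prod>l\<in>S. z - t l) * (\<Sum>l\<in>S. 1 / (z - t l))"
proof -
  have pl: "poly [:- t l, 1:] z = z - t l" for l by simp
  have pd: "pderiv [:- t a, 1:] = 1" for a by (simp add: pderiv_pCons)
  have "poly (pderiv (\<Prod>l\<in>S. [:- t l, 1:])) z = (\<Sum>a\<in>S. \<Prod>l\<in>S - {a}. z - t l)"
    by (simp only: pderiv_prod pd mult_1_right poly_sum poly_prod pl)
  also have "\<dots> = (\<Sum>a\<in>S. (\<Prod>l\<in>S. z - t l) * (1 / (z - t a)))"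
  proof (rule sum.cong[OF refl])
    fix a assume a: "a \<in> S"
    have "(\<Prod>l\<in>S. z - t l) = (z - t a) * (\<Prod>l\<in>S - {a}. z - t l)"
      using a assms(1) by (simp add: prod.remove)
    then show "(\<Prod>l\<in>S - {a}. z - t l) = (\<Prod>l\<in>S. z - t l) * (1 / (z - t a))"
      using assms(2) a by (simp add: field_simps)
  qed
  finally show ?thesis by (simp add: sum_distrib_left)
qed

definition Rp :: "nat \<Rightarrow> complex \<Rightarrow> complex poly \<Rightarrow> complex poly" where
  "Rp k xi1 p = pCons 0 (pCons 0 (pderiv (pderiv p))) - pCons 0 (pderiv (pderiv p))
     - smult (2 * of_nat k + xi1 - 1) (pCons 0 (pderiv p)) + smult (xi1 - 1) (pderiv p)
     + smult (of_nat k * (of_nat k + xi1)) p"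

lemma poly_Rp: "poly (Rp k xi1 p) z = z * (z * poly (pderiv (pderiv p)) z) - z * poly (pderiv (pderiv p)) z
   - (2 * of_nat k + xi1 - 1) * (z * poly (pderiv p) z) + (xi1 - 1) * poly (pderiv p) z
   + of_nat k * (of_nat k + xi1) * poly p z"
  by (simp add: Rp_def algebra_simps)

lemma coeff_Rp: "coeff (Rp k xi1 p) m =
   (of_nat m - of_nat k) * (of_nat m - of_nat k - xi1) * coeff p m
   - of_nat (m+1) * (of_nat (m+1) - xi1) * coeff p (m+1)"
proof (cases m)
  case 0 then show ?thesis by (simp add: Rp_def coeff_pderiv algebra_simps)
next
  case (Suc m')
  show ?thesis
  proof (cases m')
    case 0 then show ?thesis using Suc by (simp add: Rp_def coeff_pderiv algebra_simps)
  next
    case (Suc m'')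
    then show ?thesis using \<open>m = Suc m'\<close> by (simp add: Rp_def coeff_pderiv algebra_simps)
  qed
qed

lemma crit_root:
  assumes crit: "is_crit k xi1 t" and j: "j \<in> {1..k}"
  shows "poly (Rp k xi1 (cp k t)) (t j) = 0"
proof -
  define S where "S = {1..k} - {j}"
  define q where "q = (\<Prod>l\<in>S. [:- t l, 1:])"
  have dist: "\<forall>l\<in>S. t j \<noteq> t l" using crit j by (auto simp: is_crit_def S_def)
  have tj0: "t j \<noteq> 0" "t j \<noteq> 1" using crit j by (auto simp: is_crit_def)
  have dp: "dPhi_H k xi1 t j = 0" using crit j by (auto simp: is_crit_def)
  have cpq: "cp k t = [:- t j, 1:] * q"
    unfolding cp_def q_def S_def using j by (simp add: prod.remove)
  have pl: "pderiv [:- t j, 1:] = 1" by (simp add: pderiv_pCons)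
  have d1: "pderiv (cp k t) = [:- t j, 1:] * pderiv q + q"
    unfolding cpq pderiv_mult pl by simp
  have d2: "pderiv (pderiv (cp k t)) = [:- t j, 1:] * pderiv (pderiv q) + pderiv q + pderiv q"
    unfolding d1 pderiv_add pderiv_mult pl by simp
  define Q where "Q = poly q (t j)"
  have Qe: "Q = (\<Prod>l\<in>S. t j - t l)" by (simp add: Q_def q_def poly_prod)
  have fS: "finite S" by (simp add: S_def)
  define \<Sigma> where "\<Sigma> = (\<Sum>l\<in>S. 1 / (t j - t l))"
  have q1: "poly (pderiv q) (t j) = Q * \<Sigma>"
    unfolding q_def Qe \<Sigma>_def by (rule logder[OF fS dist])
  have p1: "poly (pderiv (cp k t)) (t j) = Q" by (simp add: d1 Q_def)
  have p2: "poly (pderiv (pderiv (cp k t))) (t j) = 2 * Q * \<Sigma>" by (simp add: d2 q1)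
  have p0: "poly (cp k t) (t j) = 0" by (simp add: cpq)
  have s2: "(\<Sum>l\<in>S. 2 / (t j - t l)) = 2 * \<Sigma>"
    by (simp add: \<Sigma>_def sum_distrib_left)
  have eq: "2 * \<Sigma> = 2 * of_nat k / (t j - 1) + (xi1 - 1) / t j"
    using dp unfolding dPhi_H_def S_def[symmetric] s2 by (simp add: algebra_simps)
  have "poly (Rp k xi1 (cp k t)) (t j) =
      Q * (t j * (t j - 1) * (2 * \<Sigma>) - (2 * of_nat k + xi1 - 1) * t j + (xi1 - 1))"
    unfolding poly_Rp p0 p1 p2 by (simp add: algebra_simps)
  also have "t j * (t j - 1) * (2 * \<Sigma>) = 2 * of_nat k * t j + (xi1 - 1) * (t j - 1)"
    unfolding eq using tj0 by (simp add: field_simps)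
  finally show ?thesis by (simp add: algebra_simps)
qed

lemma crit_R0:
  assumes crit: "is_crit k xi1 t" and k: "k \<ge> 1"
  shows "Rp k xi1 (cp k t) = 0"
proof -
  have c0: "coeff (Rp k xi1 (cp k t)) m = 0" if "m \<ge> k" for m
  proof (cases "m = k")
    case True then show ?thesis by (simp add: coeff_Rp coeff_cp_high)
  next
    case False then show ?thesis using that by (simp add: coeff_Rp coeff_cp_high)
  qed
  have deg: "degree (Rp k xi1 (cp k t)) \<le> k - 1"
    by (rule degree_le) (use c0 k in auto)
  have inj: "inj_on t {1..k}" using crit by (auto simp: is_crit_def inj_on_def)
  have card: "card (t ` {1..k}) = k" using card_image[OF inj] by simp
  show ?thesis
  proof (rule poly_eqI_degree[of "t ` {1..k}"])
    fix x assume "x \<in> t ` {1..k}"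
    then show "poly (Rp k xi1 (cp k t)) x = poly 0 x" using crit_root[OF crit] by auto
  next
    show "degree (Rp k xi1 (cp k t)) < card (t ` {1..k})" using deg k card by linarith
  next
    show "degree (0::complex poly) < card (t ` {1..k})" using k card by simp
  qed
qed

lemma crit_recursion:
  assumes crit: "is_crit k xi1 t"
  shows "(of_nat m - of_nat k) * (of_nat m - of_nat k - xi1) * coeff (cp k t) m
       = of_nat (m+1) * (of_nat (m+1) - xi1) * coeff (cp k t) (m+1)"
proof (cases "k \<ge> 1")
  case True
  have "coeff (Rp k xi1 (cp k t)) m = 0" using crit_R0[OF crit True] by simp
  then show ?thesis by (simp add: coeff_Rp)
next
  case False
  then have "k = 0" by simp
  then have "cp k t = 1" by (simp add: cp_def)
  then show ?thesis by (cases m) (auto simp: \<open>k = 0\<close>)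
qed

lemma closed_form:
  fixes c :: "nat \<Rightarrow> complex" and xi1 :: complex
  assumes ck: "c k = 1"
    and rec: "\<And>m. (of_nat m - of_nat k) * (of_nat m - of_nat k - xi1) * c m
       = of_nat (m+1) * (of_nat (m+1) - xi1) * c (m+1)"
  shows "d \<le> k \<Longrightarrow> c (k - d) * pochhammer (xi1 + 1) d
           = of_nat (k choose d) * (\<Prod>i<d. of_nat k - xi1 - of_nat i)"
proof (induction d)
  case 0 then show ?case by (simp add: ck)
next
  case (Suc d)
  define m where "m = k - Suc d"
  have m1: "m + 1 = k - d" using Suc.prems by (simp add: m_def)
  have mk: "(of_nat m :: complex) = of_nat k - of_nat d - 1" using Suc.prems
    by (simp add: m_def of_nat_diff)
  have r: "(of_nat (d+1) :: complex) * (of_nat (d+1) + xi1) * c m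
      = (of_nat k - of_nat d) * (of_nat k - of_nat d - xi1) * c (k - d)"
    using rec[of m] unfolding m1 using Suc.prems
    by (simp add: mk of_nat_diff algebra_simps)
  have IH: "c (k - d) * pochhammer (xi1 + 1) d = of_nat (k choose d) * (\<Prod>i<d. of_nat k - xi1 - of_nat i)"
    using Suc by simp
  have bin: "of_nat (Suc d) * (of_nat (k choose Suc d) :: complex) = (of_nat k - of_nat d) * of_nat (k choose d)"
  proof -
    have "Suc d * (k choose Suc d) = (k - d) * (k choose d)"
      using binomial_absorption[of d k] binomial_absorb_comp[of k d] by simp
    then have "(of_nat (Suc d * (k choose Suc d)) :: complex) = of_nat ((k - d) * (k choose d))" by simp
    then show ?thesis using Suc.prems by (simp add: of_nat_diff algebra_simps)
  qed
  have "of_nat (Suc d) * (c m * pochhammer (xi1 + 1) (Suc d))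
      = ((of_nat (d+1)) * (of_nat (d+1) + xi1) * c m) * pochhammer (xi1 + 1) d"
    by (simp add: pochhammer_Suc algebra_simps)
  also have "\<dots> = (of_nat k - of_nat d) * (of_nat k - of_nat d - xi1) * (c (k - d) * pochhammer (xi1 + 1) d)"
    unfolding r by (simp add: algebra_simps)
  also have "\<dots> = (of_nat k - of_nat d) * of_nat (k choose d) * ((\<Prod>i<d. of_nat k - xi1 - of_nat i) * (of_nat k - xi1 - of_nat d))"
    unfolding IH by (simp add: algebra_simps)
  also have "\<dots> = (of_nat (Suc d) * of_nat (k choose Suc d)) * ((\<Prod>i<d. of_nat k - xi1 - of_nat i) * (of_nat k - xi1 - of_nat d))"
    by (simp only: bin)
  also have "\<dots> = of_nat (Suc d) * (of_nat (k choose Suc d) * (\<Prod>i<Suc d. of_nat k - xi1 - of_nat i))"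
    by (simp only: prod.lessThan_Suc mult.assoc)
  finally have "of_nat (Suc d) * (c m * pochhammer (xi1 + 1) (Suc d))
      = of_nat (Suc d) * (of_nat (k choose Suc d) * (\<Prod>i<Suc d. of_nat k - xi1 - of_nat i))" .
  then show ?case unfolding m_def by (simp del: of_nat_Suc)
qed

lemma sum_rev_atMost: "(\<Sum>m\<le>k. f m) = (\<Sum>d\<le>k. f (k - d))" for k :: nat
proof -
  have "(\<Sum>d\<le>k. f (k - d)) = (\<Sum>d<Suc k. f (Suc k - Suc d))" by (simp add: lessThan_Suc_atMost)
  also have "\<dots> = (\<Sum>m<Suc k. f m)" by (rule sum.nat_diff_reindex)
  finally show ?thesis by (simp add: lessThan_Suc_atMost)
qed

lemma sum_p1:
  fixes c :: "nat \<Rightarrow> complex" and xi1 :: complex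
  assumes cl: "\<And>d. d \<le> k \<Longrightarrow> c (k - d) * pochhammer (xi1 + 1) d
           = of_nat (k choose d) * (\<Prod>i<d. of_nat k - xi1 - of_nat i)"
  shows "(\<Sum>m\<le>k. c m) * pochhammer (xi1 + 1) k = of_nat (fact k * (2*k choose k))"
proof -
  define a where "a = of_nat k - xi1"
  define b where "b = of_nat k + xi1"
  have tm: "c (k - d) * pochhammer (xi1 + 1) k = fact k * ((a gchoose d) * (b gchoose (k - d)))"
    if d: "d \<le> k" for d
  proof -
    have "c (k - d) * pochhammer (xi1 + 1) k = (c (k - d) * pochhammer (xi1 + 1) d) * pochhammer (xi1 + 1 + of_nat d) (k - d)"
      using pochhammer_product[OF d, of "xi1 + 1"] by (simp add: mult_ac)
    also have "\<dots> = of_nat (k choose d) * (\<Prod>i<d. of_nat k - xi1 - of_nat i) * pochhammer (xi1 + 1 + of_nat d) (k - d)"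
      by (simp add: cl[OF d])
    also have "(\<Prod>i<d. of_nat k - xi1 - of_nat i) = (a gchoose d) * fact d"
      by (simp add: gbinomial_prod_rev a_def atLeast0LessThan)
    also have "pochhammer (xi1 + 1 + of_nat d) (k - d) = (b gchoose (k - d)) * fact (k - d)"
    proof -
      have "b - of_nat (k - d) + 1 = xi1 + 1 + of_nat d" using d by (simp add: b_def of_nat_diff)
      then show ?thesis by (simp add: gbinomial_pochhammer' add_ac)
    qed
    also have "of_nat (k choose d) = (fact k / (fact d * fact (k - d)) :: complex)"
      by (rule binomial_fact[OF d])
    finally show ?thesis by (simp add: field_simps)
  qed
  have "(\<Sum>m\<le>k. c m) * pochhammer (xi1 + 1) k = (\<Sum>d\<le>k. c (k - d) * pochhammer (xi1 + 1) k)"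
    by (subst sum_rev_atMost) (simp add: sum_distrib_right)
  also have "\<dots> = fact k * (\<Sum>d=0..k. (a gchoose d) * (b gchoose (k - d)))"
    by (simp add: tm sum_distrib_left atLeast0AtMost)
  also have "(\<Sum>d=0..k. (a gchoose d) * (b gchoose (k - d))) = (a + b) gchoose k"
    by (rule gbinomial_Vandermonde)
  also have "a + b = of_nat (2*k)" by (simp add: a_def b_def)
  also have "(of_nat (2*k) :: complex) gchoose k = of_nat (2*k choose k)"
    by (rule binomial_gbinomial[symmetric])
  finally show ?thesis by simp
qed

lemma negprod: "(\<Prod>r<j. xi1 - 1 - of_nat r) = (-1)^j * pochhammer (1 - xi1) j" for xi1 :: complex
  by (induction j) (simp_all add: pochhammer_Suc algebra_simps)

lemma posprod: "(\<Prod>r<j. (of_nat (k + r + 1)::complex)) = pochhammer (of_nat k + 1) j"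
  by (induction j) (simp_all add: pochhammer_Suc algebra_simps)

lemma fallprod: "j \<le> k \<Longrightarrow> (\<Prod>r<j. (of_nat (k - r)::complex)) = fact k / fact (k - j)"
proof (induction j)
  case 0 then show ?case by simp
next
  case (Suc j)
  then have jk: "j < k" by simp
  have f: "(fact (k - j) :: complex) = of_nat (k - j) * fact (k - Suc j)"
  proof -
    have "k - j = Suc (k - Suc j)" using jk by simp
    then show ?thesis by (simp only: fact_Suc)
  qed
  have nz: "(fact (k - Suc j) :: complex) \<noteq> 0" by simp
  show ?case using Suc jk f nz by (simp add: field_simps)
qed

lemma shprod: "(\<Prod>r<j. of_nat (r+1) * (xi1 - 1 - of_nat r)) = fact j * ((-1)^j * pochhammer (1 - xi1) j)"
  for xi1 :: complex
  by (induction j) (simp_all add: pochhammer_Suc algebra_simps)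

definition aa' :: "nat \<Rightarrow> nat \<Rightarrow> complex" where
  "aa' k m = (\<Prod>r<m. of_nat (k - r) * of_nat (k + r + 1))"

lemma sum_S:
  fixes xi1 :: complex
  assumes hyp: "\<forall>m\<in>{1..k}. xi1 \<noteq> of_nat m"
  shows "(\<Sum>j\<le>k. aa' k j / (\<Prod>r<j. of_nat (r+1) * (xi1 - 1 - of_nat r))) * ((-1)^k * pochhammer (1 - xi1) k)
     = pochhammer (xi1 + 1) k"
proof -
  define A :: complex where "A = - (of_nat k + 1)"
  define B where "B = of_nat k - xi1"
  have tm: "aa' k j / (\<Prod>r<j. of_nat (r+1) * (xi1 - 1 - of_nat r)) * ((-1)^k * pochhammer (1 - xi1) k)
      = fact k * (-1)^k * ((A gchoose j) * (B gchoose (k - j)))" if j: "j \<le> k" for j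
  proof -
    have pz: "pochhammer (1 - xi1) j \<noteq> 0"
    proof -
      have "(\<Prod>r<j. xi1 - 1 - of_nat r) \<noteq> 0"
      proof
        assume "(\<Prod>r<j. xi1 - 1 - of_nat r) = 0"
        then obtain r where r: "r < j" "xi1 - 1 - of_nat r = 0" by auto
        then have "xi1 = of_nat (r + 1)" by (simp add: algebra_simps)
        moreover have "r + 1 \<in> {1..k}" using r j by simp
        ultimately show False using hyp by blast
      qed
      then show ?thesis by (simp add: negprod)
    qed
    have aa: "aa' k j = fact k / fact (k - j) * pochhammer (of_nat k + 1) j"
      unfolding aa'_def prod.distrib using fallprod[OF j] posprod by simp
    have pk: "pochhammer (1 - xi1) k = pochhammer (1 - xi1) j * pochhammer (1 - xi1 + of_nat j) (k - j)"
      by (rule pochhammer_product[OF j])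
    have Ag: "A gchoose j = (-1)^j * pochhammer (of_nat k + 1) j / fact j"
      by (simp add: gbinomial_pochhammer A_def add.commute)
    have Bg: "B gchoose (k - j) = pochhammer (1 - xi1 + of_nat j) (k - j) / fact (k - j)"
    proof -
      have e: "B - of_nat (k - j) + 1 = 1 - xi1 + of_nat j" using j by (simp add: B_def of_nat_diff)
      show ?thesis by (subst gbinomial_pochhammer') (simp only: e)
    qed
    have s: "((-1::complex)^j) * (-1)^j = 1" by (simp add: power_mult_distrib[symmetric])
    show ?thesis unfolding shprod aa pk Ag Bg using pz s
      by (simp add: field_simps)
  qed
  have "(\<Sum>j\<le>k. aa' k j / (\<Prod>r<j. of_nat (r+1) * (xi1 - 1 - of_nat r))) * ((-1)^k * pochhammer (1 - xi1) k)
      = (\<Sum>j\<le>k. fact k * (-1)^k * ((A gchoose j) * (B gchoose (k - j))))"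
    unfolding sum_distrib_right by (rule sum.cong[OF refl]) (rule tm, simp)
  also have "\<dots> = fact k * (-1)^k * (\<Sum>j=0..k. (A gchoose j) * (B gchoose (k - j)))"
    by (simp add: sum_distrib_left atLeast0AtMost)
  also have "(\<Sum>j=0..k. (A gchoose j) * (B gchoose (k - j))) = (A + B) gchoose k"
    by (rule gbinomial_Vandermonde)
  also have "(A + B) gchoose k = (-1)^k * pochhammer (xi1 + 1) k / fact k"
    by (simp add: gbinomial_pochhammer A_def B_def algebra_simps)
  finally show ?thesis
    by (simp add: field_simps power_mult_distrib[symmetric])
qed

lemma verma_f_pow: "(verma_f ^^ m) (\<lambda>i. if i = 0 then 1 else 0) = (\<lambda>i. if i = m then 1 else 0)"
proof (induction m)
  case 0 then show ?case by simp
next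
  case (Suc m)
  have "(verma_f ^^ Suc m) (\<lambda>i. if i = 0 then 1 else 0) = verma_f (\<lambda>i. if i = m then 1 else 0)"
    using Suc by simp
  also have "\<dots> = (\<lambda>i. if i = Suc m then 1 else 0)" by (auto simp: verma_f_def intro!: ext)
  finally show ?case .
qed

lemma verma_e_pow: "(verma_e muh ^^ j) (\<lambda>i. if i = n + j then c else 0) =
   (\<lambda>i. if i = n then c * (\<Prod>r<j. of_nat (n+r+1) * (muh - of_nat (n+r))) else 0)"
proof (induction j arbitrary: c)
  case 0 then show ?case by (auto intro!: ext)
next
  case (Suc j)
  have e: "verma_e muh (\<lambda>i. if i = n + Suc j then c else 0) =
      (\<lambda>i. if i = n + j then c * (of_nat (n+j+1) * (muh - of_nat (n+j))) else 0)"
    by (auto simp: verma_e_def intro!: ext)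
  show ?case
    unfolding funpow_Suc_right o_apply e Suc.IH
    by (auto simp: algebra_simps intro!: ext)
qed

lemma shapU_diag: "shapU muh j j = (\<Prod>r<j. of_nat (r+1) * (muh - of_nat r))"
proof -
  have "shapU muh j j = ((verma_e muh ^^ j) (\<lambda>i. if i = 0 + j then 1 else 0)) 0"
    by (simp add: shapU_def verma_f_pow)
  also have "\<dots> = (\<Prod>r<j. of_nat (r+1) * (muh - of_nat r))"
    by (simp only: verma_e_pow) simp
  finally show ?thesis .
qed

definition beta :: "nat \<Rightarrow> complex \<Rightarrow> nat \<Rightarrow> complex" where
  "beta k xi1 j = inverse (shapU (xi1 - 1) j j) * ((-1)^j * aa k j)"

lemma AX_small:
  fixes X :: complex
  assumes "cmod X < 1"
  shows "AX_coeff X j = (X / (1 - X))^j"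
proof -
  have "\<forall>l\<in>{1..j}. X^l \<noteq> 1"
  proof
    fix l assume l: "l \<in> {1..j}"
    have "cmod (X^l) < 1" using assms l by (simp add: norm_power power_less_one_iff)
    then show "X^l \<noteq> 1" by auto
  qed
  then show ?thesis by (simp add: AX_eq power_divide)
qed

lemma AX_big:
  fixes X :: complex
  assumes "cmod X > 1"
  shows "AX_coeff X j = (X / (1 - X))^j"
proof -
  have "\<forall>l\<in>{1..j}. X^l \<noteq> 1"
  proof
    fix l assume l: "l \<in> {1..j}"
    have "cmod (X^l) > 1" using assms l by (simp add: norm_power one_less_power)
    then show "X^l \<noteq> 1" by auto
  qed
  then show ?thesis by (simp add: AX_eq power_divide)
qed

lemma psicoef_beta: "psicoef k xi1 X = (\<Sum>j\<le>2*k. beta k xi1 j * AX_coeff X j)"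
  unfolding psicoef_def beta_def by (rule sum.cong) (simp_all add: mult_ac)

lemma psicoef_W:
  assumes "\<delta> > 0"
  shows "psicoef k xi1 (Xc \<delta> (of_real x)) = (\<Sum>j\<le>2*k. beta k xi1 j * (Wc \<delta> (of_real x) - 1)^j)"
proof -
  define X where "X = Xc \<delta> (of_real x)"
  have X1: "cmod X < 1" using Xc_lt1[OF assms] by (simp add: X_def)
  then have "X \<noteq> 1" by auto
  then have e: "X / (1 - X) = Wc \<delta> (of_real x) - 1"
    unfolding Wc_def X_def[symmetric] by (simp add: field_simps)
  show ?thesis unfolding psicoef_beta X_def[symmetric] AX_small[OF X1] e ..
qed

lemma psicoef_W':
  assumes "\<delta> > 0"
  shows "psicoef k xi1 (inverse (Xc \<delta> (of_real x))) = (\<Sum>j\<le>2*k. beta k xi1 j * (- Wc \<delta> (of_real x))^j)"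
proof -
  define X where "X = Xc \<delta> (of_real x)"
  have X1: "cmod X < 1" using Xc_lt1[OF assms] by (simp add: X_def)
  have X0: "X \<noteq> 0" by (simp add: X_def Xc_def)
  have X1': "X \<noteq> 1" using X1 by auto
  have big: "cmod (inverse X) > 1"
    using X1 X0 by (simp add: norm_inverse one_less_inverse)
  have e: "inverse X / (1 - inverse X) = - Wc \<delta> (of_real x)"
  proof -
    have "1 - X \<noteq> 0" using X1' by simp
    then show ?thesis unfolding Wc_def X_def[symmetric] using X0 X1'
      by (simp add: field_simps)
  qed
  show ?thesis unfolding psicoef_beta X_def[symmetric] AX_big[OF big] e ..
qed

lemma exp_y: "exp (- 2 * pi * \<i> * (of_real x - \<i> * of_real \<delta>)) = Xc \<delta> (of_real x)"
  by (simp add: Xc_def)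

lemma exp_my: "exp (- 2 * pi * \<i> * (- (of_real x - \<i> * of_real \<delta>))) = inverse (Xc \<delta> (of_real x))"
proof -
  have e: "- 2 * pi * \<i> * (- (of_real x - \<i> * of_real \<delta>)) = - (- 2 * pi * \<i> * (of_real x - \<i> * of_real \<delta>))"
    by (simp only: mult_minus_right)
  show ?thesis unfolding e exp_minus Xc_def ..
qed

lemma rearr: "(a1 * c * p1) * (a2 * c * p2) * g = (a1 * a2) * (c^2 * g * p1 * p2)" for a1 a2 c p1 p2 g :: complex
  by (simp add: power2_eq_square mult_ac)

lemma integrand:
  assumes "\<delta> > 0"
  shows "shap k (psi k xi1 (dl k c) (of_real x - \<i> * of_real \<delta>))
                 (psi k xi1 (dl k c) (- (of_real x - \<i> * of_real \<delta>)))
    = c^2 * gk k k * (\<Sum>j\<le>2*k. beta k xi1 j * (Wc \<delta> (of_real x) - 1)^j)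
                   * (\<Sum>j\<le>2*k. beta k xi1 j * (- Wc \<delta> (of_real x))^j)"
proof -
  define y where "y = of_real x - \<i> * of_real \<delta>"
  have E: "exp (2 * pi * \<i> * (xi1 * y / 2)) * exp (2 * pi * \<i> * (xi1 * (- y) / 2)) = 1"
  proof -
    have "2 * pi * \<i> * (xi1 * (- y) / 2) = - (2 * pi * \<i> * (xi1 * y / 2))"
      by (simp only: mult_minus_right minus_divide_left[symmetric])
    then show ?thesis by (simp only: exp_minus_inverse)
  qed
  have "shap k (psi k xi1 (dl k c) y) (psi k xi1 (dl k c) (- y))
     = (exp (2 * pi * \<i> * (xi1 * y / 2)) * exp (2 * pi * \<i> * (xi1 * (- y) / 2))) *
       (c^2 * gk k k * psicoef k xi1 (exp (- 2 * pi * \<i> * y)) * psicoef k xi1 (exp (- 2 * pi * \<i> * (- y))))"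
    unfolding psi_dl shap_dl by (rule rearr)
  also have "\<dots> = 1 * (c^2 * gk k k * psicoef k xi1 (exp (- 2 * pi * \<i> * y)) * psicoef k xi1 (exp (- 2 * pi * \<i> * (- y))))"
    by (simp only: E)
  also have "\<dots> = c^2 * gk k k * psicoef k xi1 (Xc \<delta> (of_real x)) * psicoef k xi1 (inverse (Xc \<delta> (of_real x)))"
    by (simp only: y_def exp_y exp_my mult_1_left)
  finally show ?thesis unfolding y_def psicoef_W[OF assms] psicoef_W'[OF assms] .
qed

definition PA :: "nat \<Rightarrow> complex \<Rightarrow> complex poly" where
  "PA k xi1 = (\<Sum>j\<le>2*k. smult (beta k xi1 j) ([:-1, 1:]^j))"

definition PB :: "nat \<Rightarrow> complex \<Rightarrow> complex poly" where
  "PB k xi1 = (\<Sum>j\<le>2*k. smult (beta k xi1 j) ([:0, -1:]^j))"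

lemma poly_PA: "poly (PA k xi1) w = (\<Sum>j\<le>2*k. beta k xi1 j * (w - 1)^j)"
  by (simp add: PA_def poly_sum)

lemma poly_PB: "poly (PB k xi1) w = (\<Sum>j\<le>2*k. beta k xi1 j * (- w)^j)"
  by (simp add: PB_def poly_sum)

lemma pairing_val:
  assumes "\<delta> > 0"
  shows "pairing k (psi k xi1 (dl k c)) (psi k xi1 (dl k c)) \<delta>
     = c^2 * gk k k * (\<Sum>j\<le>2*k. inverse (shapU (xi1 - 1) j j) * aa k j)"
proof -
  define R where "R = smult (c^2 * gk k k) (PA k xi1 * PB k xi1)"
  have f: "(\<lambda>x. shap k (psi k xi1 (dl k c) (of_real x - \<i> * of_real \<delta>))
                 (psi k xi1 (dl k c) (- (of_real x - \<i> * of_real \<delta>))))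
      = (\<lambda>x. poly R (Wc \<delta> (of_real x)))"
    by (rule ext) (simp only: integrand[OF assms] R_def poly_PA poly_PB poly_smult poly_mult mult.assoc)
  have v: "pairing k (psi k xi1 (dl k c)) (psi k xi1 (dl k c)) \<delta> = poly R 1"
    unfolding pairing_def f by (rule integral_unique[OF poly_int[OF assms]])
  have a: "poly (PA k xi1) 1 = 1"
  proof -
    have "poly (PA k xi1) 1 = (\<Sum>j\<le>2*k. beta k xi1 j * 0^j)" by (simp add: poly_PA)
    also have "\<dots> = beta k xi1 0 + (\<Sum>j\<in>{..2*k}-{0}. beta k xi1 j * 0^j)"
      by (subst sum.remove[of _ 0]) auto
    also have "(\<Sum>j\<in>{..2*k}-{0}. beta k xi1 j * 0^j) = 0"
      by (rule sum.neutral) auto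
    also have "beta k xi1 0 = 1" by (simp add: beta_def shapU_diag aa_def)
    also have "1 + 0 = (1::complex)" by simp
    finally show ?thesis .
  qed
  have b: "poly (PB k xi1) 1 = (\<Sum>j\<le>2*k. inverse (shapU (xi1 - 1) j j) * aa k j)"
  proof -
    have "poly (PB k xi1) 1 = (\<Sum>j\<le>2*k. beta k xi1 j * (-1)^j)" by (simp add: poly_PB)
    also have "\<dots> = (\<Sum>j\<le>2*k. inverse (shapU (xi1 - 1) j j) * aa k j)"
      by (rule sum.cong[OF refl]) (simp add: beta_def power_mult_distrib[symmetric])
    finally show ?thesis .
  qed
  show ?thesis using v a b by (simp add: R_def)
qed

lemma gk_kk: "gk k k = fact (2*k)"
proof -
  have a: "(\<Prod>r<k. (of_nat (r+1)::complex)) = fact k"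
    by (induction k) (simp_all add: algebra_simps)
  have b: "(\<Prod>r<k. (of_nat (2*k) - of_nat r :: complex)) = (\<Prod>r<k. of_nat (2*k - r))"
    by (rule prod.cong) (auto simp: of_nat_diff)
  have c: "(\<Prod>r<k. (of_nat (2*k - r) :: complex)) = fact (2*k) / fact (2*k - k)"
    by (rule fallprod) simp
  show ?thesis unfolding gk_def prod.distrib a b c by simp
qed

lemma aa_eq: "aa' k j = aa k j" by (simp add: aa'_def aa_def)

lemma S_eq:
  fixes xi1 :: complex
  shows "(\<Sum>j\<le>2*k. inverse (shapU (xi1 - 1) j j) * aa k j)
       = (\<Sum>j\<le>k. aa' k j / (\<Prod>r<j. of_nat (r+1) * (xi1 - 1 - of_nat r)))"
proof -
  have "(\<Sum>j\<le>2*k. inverse (shapU (xi1 - 1) j j) * aa k j) = (\<Sum>j\<le>k. inverse (shapU (xi1 - 1) j j) * aa k j)"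
    by (rule sum.mono_neutral_right) (auto simp: aa_zero)
  also have "\<dots> = (\<Sum>j\<le>k. aa' k j / (\<Prod>r<j. of_nat (r+1) * (xi1 - 1 - of_nat r)))"
    by (rule sum.cong[OF refl]) (simp add: shapU_diag aa_eq divide_inverse mult_ac)
  finally show ?thesis .
qed

lemma N_eq: "fact k * (\<Prod>i=k+1..2*k. i) = fact (2*k)"
proof -
  have "fact (2*k) div fact k = \<Prod>{k+1..2*k}" by (rule fact_div_fact) simp
  moreover have "fact k dvd (fact (2*k) :: nat)" by (rule fact_dvd) simp
  ultimately show ?thesis by (metis dvd_mult_div_cancel)
qed

lemma F_eq: "fact k * (2*k choose k) = (\<Prod>i=k+1..2*k. i)"
proof -
  have "fact k * (fact k * (2*k choose k)) = fact (2*k)"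
    using binomial_fact_lemma[of k "2*k"] by (simp add: mult_ac)
  then have "fact k * (fact k * (2*k choose k)) = fact k * (\<Prod>i=k+1..2*k. i)" using N_eq by simp
  then show ?thesis by simp
qed

theorem theorem9p2:
  fixes k :: nat and xi1 :: complex and t :: "nat \<Rightarrow> complex" and \<delta> :: real
  assumes "\<forall>m\<in>{1..k}. xi1 \<noteq> of_nat m"
    and "is_isolated_crit k xi1 t"
    and "\<delta> > 0"
  shows "pairing k (psi k xi1 (bethe_vec k t)) (psi k xi1 (bethe_vec k t)) \<delta> =
    ((\<Prod>i=1..k. xi1 + of_nat i) ^ 3 * of_nat (fact k)) /
    ((\<Prod>i=1..k. xi1 - of_nat i) * of_nat (\<Prod>i=k+1..2*k. i))"
proof -
  note hyp = assms(1)
  have crit: "is_crit k xi1 t" using assms(2) by (simp add: is_isolated_crit_def)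
  define c0 where "c0 = (\<Prod>j=1..k. 1 / (t j - 1))"
  define S where "S = (\<Sum>j\<le>k. aa' k j / (\<Prod>r<j. of_nat (r+1) * (xi1 - 1 - of_nat r)))"
  define P where "P = pochhammer (xi1 + 1) k"
  define M where "M = (-1)^k * pochhammer (1 - xi1) k"
  define p1 where "p1 = (\<Prod>j=1..k. 1 - t j)"
  define N where "N = (\<Prod>i=k+1..2*k. i)"
  have pv: "pairing k (psi k xi1 (bethe_vec k t)) (psi k xi1 (bethe_vec k t)) \<delta> = c0^2 * fact (2*k) * S"
    unfolding bethe_dl c0_def[symmetric] pairing_val[OF assms(3)] gk_kk S_eq S_def ..
  have hS: "S * M = P" unfolding S_def M_def P_def by (rule sum_S[OF hyp])
  have cl: "coeff (cp k t) (k - d) * pochhammer (xi1 + 1) d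
           = of_nat (k choose d) * (\<Prod>i<d. of_nat k - xi1 - of_nat i)" if "d \<le> k" for d
    by (rule closed_form[OF lead_cp crit_recursion[OF crit] that])
  have hp0: "(\<Sum>m\<le>k. coeff (cp k t) m) * P = of_nat (fact k * (2*k choose k))"
    unfolding P_def by (rule sum_p1[OF cl])
  have p1e: "(\<Sum>m\<le>k. coeff (cp k t) m) = p1"
  proof -
    have "poly (cp k t) 1 = (\<Sum>m\<le>k. coeff (cp k t) m)" by (simp add: poly_altdef degree_cp)
    then show ?thesis by (simp add: poly_cp p1_def)
  qed
  have hp: "p1 * P = of_nat N" using hp0 unfolding p1e N_def F_eq .
  have tne: "t j - 1 \<noteq> 0" if "j \<in> {1..k}" for j using crit that by (auto simp: is_crit_def)
  have hc: "c0 * p1 = (-1)^k"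
  proof -
    have "c0 * p1 = (\<Prod>j=1..k. 1 / (t j - 1) * (1 - t j))"
      unfolding c0_def p1_def by (rule prod.distrib[symmetric])
    also have "\<dots> = (\<Prod>j=1..k. (-1::complex))"
    proof (rule prod.cong[OF refl])
      fix j assume "j \<in> {1..k}"
      then have "t j - 1 \<noteq> 0" by (rule tne)
      then show "1 / (t j - 1) * (1 - t j) = -1" by (simp add: field_simps)
    qed
    finally show ?thesis by simp
  qed
  have hc2: "c0^2 * p1^2 = 1" using hc by (simp add: power_mult_distrib[symmetric] power_mult_distrib power_even_eq[symmetric])
  have Nnz: "(of_nat N :: complex) \<noteq> 0" by (simp add: N_def)
  have p1nz: "p1 \<noteq> 0" and Pnz: "P \<noteq> 0" using hp Nnz by auto
  have Mnz: "M \<noteq> 0"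
  proof -
    have "M = (\<Prod>r<k. xi1 - 1 - of_nat r)" by (simp add: M_def negprod)
    moreover have "(\<Prod>r<k. xi1 - 1 - of_nat r) \<noteq> 0"
    proof
      assume "(\<Prod>r<k. xi1 - 1 - of_nat r) = 0"
      then obtain r where r: "r < k" "xi1 - 1 - of_nat r = 0" by auto
      then have "xi1 = of_nat (r + 1)" by (simp add: algebra_simps)
      moreover have "r + 1 \<in> {1..k}" using r by simp
      ultimately show False using hyp by blast
    qed
    ultimately show ?thesis by simp
  qed
  have Pe: "(\<Prod>i=1..k. xi1 + of_nat i) = P"
    unfolding P_def pochhammer_prod by (simp add: prod.atLeast1_atMost_eq atLeast0LessThan algebra_simps)
  have Me: "(\<Prod>i=1..k. xi1 - of_nat i) = M"
    unfolding M_def negprod[symmetric] by (simp add: prod.atLeast1_atMost_eq algebra_simps)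
  have fN: "(fact (2*k) :: complex) = of_nat (fact k) * of_nat N"
    unfolding N_def using N_eq[of k] by (metis of_nat_fact of_nat_mult)
  have c02: "c0^2 = 1 / p1^2" using hc2 p1nz by (simp add: field_simps)
  have Se: "S = P / M" using hS Mnz by (simp add: field_simps)
  have p1e': "p1 = of_nat N / P" using hp Pnz by (simp add: field_simps)
  show ?thesis
    unfolding pv Pe Me N_def[symmetric] c02 Se p1e' fN
    using Pnz Mnz Nnz by (simp add: field_simps power2_eq_square power3_eq_cube)
qed

end
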